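(* Let $n\ge 3$ and let $X=\mathrm{C}_n$ be the cycle graph on $n$ vertices. Then $|\mathrm{Fix}(\mathbf{F}^\uparrow)|=2+\mathrm{Luc}_{3n}=2+(2+\sqrt5)^n+(2-\sqrt5)^n$, where $\mathrm{Luc}_m$ is the $m$-th Lucas number ($\mathrm{Luc}_0=2$, $\mathrm{Luc}_1=1$, $\mathrm{Luc}_m=\mathrm{Luc}_{m-1}+\mathrm{Luc}_{m-2}$).
   Context: For a finite simple graph $X$ with vertices $1,\dots,n$, $d(v)$ is the degree of $v$ and $n[v]$ the closed neighborhood of $v$. An extended vertex state is $s_v=(x_v,k_v)\in\{0,1\}\times\{1,\dots,d(v)+1\}$; $\mathcal{S}$ is the product of these sets. Let $\sigma(x[v])=|\{u\in n[v]:x_u=1\}|$. The increasing vertex function maps $(x_v,k_v)$ to $(x_v',k_v')$ with $x_v'=1$ iff $\sigma(x[v])\ge k_v$ (else $0$), and $k_v'=k_v+1$ if $x_v=0$ and $\sigma(x[v])\ge k_v$, else $k_v'=k_v$. $\mathbf{F}^\uparrow:\mathcal{S}\to\mathcal{S}$ applies this vertex function at all vertices simultaneously, and $\mathrm{Fix}(\mathbf{F}^\uparrow)$ is its set of fixed points (equivalently: states with, for every $v$, either $x_v=0$ and $\sigma(x[v])<k_v$, or $x_v=1$ and $\sigma(x[v])\ge k_v$). *)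

theory Defs
  imports Complex_Main "HOL-Library.FuncSet"
begin

text \<open>A finite simple graph is given by a vertex set V and a symmetric irreflexive
  adjacency relation E on V.\<close>

definition degree :: "('a \<Rightarrow> 'a \<Rightarrow> bool) \<Rightarrow> 'a set \<Rightarrow> 'a \<Rightarrow> nat" where
  "degree E V v = card {u \<in> V. E v u}"

definition closed_nbhd :: "('a \<Rightarrow> 'a \<Rightarrow> bool) \<Rightarrow> 'a set \<Rightarrow> 'a \<Rightarrow> 'a set" where
  "closed_nbhd E V v = {u \<in> V. u = v \<or> E v u}"

definition ext_states :: "('a \<Rightarrow> 'a \<Rightarrow> bool) \<Rightarrow> 'a set \<Rightarrow> ('a \<Rightarrow> nat \<times> nat) set" where
  "ext_states E V = (\<Pi>\<^sub>E v\<in>V. {0,1} \<times> {1..degree E V v + 1})"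

definition sigma :: "('a \<Rightarrow> 'a \<Rightarrow> bool) \<Rightarrow> 'a set \<Rightarrow> ('a \<Rightarrow> nat \<times> nat) \<Rightarrow> 'a \<Rightarrow> nat" where
  "sigma E V s v = card {u \<in> closed_nbhd E V v. fst (s u) = 1}"

definition incr_vertex_fun ::
  "('a \<Rightarrow> 'a \<Rightarrow> bool) \<Rightarrow> 'a set \<Rightarrow> ('a \<Rightarrow> nat \<times> nat) \<Rightarrow> 'a \<Rightarrow> nat \<times> nat" where
  "incr_vertex_fun E V s v =
     (let x = fst (s v); k = snd (s v); \<sigma> = sigma E V s v in
       (if \<sigma> \<ge> k then 1 else 0, if x = 0 \<and> \<sigma> \<ge> k then k + 1 else k))"

definition F_up :: "('a \<Rightarrow> 'a \<Rightarrow> bool) \<Rightarrow> 'a set \<Rightarrow> ('a \<Rightarrow> nat \<times> nat) \<Rightarrow> ('a \<Rightarrow> nat \<times> nat)" where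
  "F_up E V s = (\<lambda>v\<in>V. incr_vertex_fun E V s v)"

definition Fix_F_up :: "('a \<Rightarrow> 'a \<Rightarrow> bool) \<Rightarrow> 'a set \<Rightarrow> ('a \<Rightarrow> nat \<times> nat) set" where
  "Fix_F_up E V = {s \<in> ext_states E V. F_up E V s = s}"

definition cycle_adj :: "nat \<Rightarrow> nat \<Rightarrow> nat \<Rightarrow> bool" where
  "cycle_adj n u v = (u < n \<and> v < n \<and> (v = (u + 1) mod n \<or> u = (v + 1) mod n))"

fun lucas :: "nat \<Rightarrow> nat" where
  "lucas 0 = 2"
| "lucas (Suc 0) = 1"
| "lucas (Suc (Suc m)) = lucas (Suc m) + lucas m"

end

theory Submission
  imports Defs
begin


definition w :: "nat \<Rightarrow> nat \<Rightarrow> nat \<Rightarrow> nat" where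
  "w a b c = (if b = 1 then 1 + a + c else 3 - (a + c))"

fun pw :: "nat \<Rightarrow> nat \<Rightarrow> nat \<Rightarrow> nat \<Rightarrow> nat \<Rightarrow> nat" where
  "pw 0 a b c d = (if a = c \<and> b = d then 1 else 0)"
| "pw (Suc m) a b c d = (\<Sum>a'\<in>{0,1}. pw m a b a' c * w a' c d)"

definition tr :: "nat \<Rightarrow> nat" where
  "tr m = (\<Sum>a\<in>{0,1}. \<Sum>b\<in>{0::nat,1}. pw m a b a b)"

lemma pw_Suc': "pw (Suc m) a b c d = pw m a b 0 c * w 0 c d + pw m a b 1 c * w 1 c d"
  by simp

lemma pw_rec:
  assumes "a \<in> {0,1}" "b \<in> {0,1}" "c \<in> {0,1}" "d \<in> {0,1}"
  shows "pw (m+4) a b c d + 8 * pw (m+2) a b c d = 6 * pw (m+3) a b c d + 2 * pw (m+1) a b c d + pw m a b c d"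
  using assms
proof (induction m arbitrary: c d)
  case 0
  have "a = 0 \<or> a = 1" "b = 0 \<or> b = 1" "c = 0 \<or> c = 1" "d = 0 \<or> d = 1" using 0 by auto
  then show ?case
    by (elim disjE) (simp_all add: numeral_eq_Suc w_def del: pw.simps(2) add: pw_Suc')
next
  case (Suc m)
  have IH: "\<And>a'. a' \<in> {0,1} \<Longrightarrow> pw (m+4) a b a' c + 8 * pw (m+2) a b a' c = 6 * pw (m+3) a b a' c + 2 * pw (m+1) a b a' c + pw m a b a' c"
    using Suc by blast
  have R: "\<And>j. pw (Suc m + j) a b c d = (\<Sum>a'\<in>{0,1}. pw (m+j) a b a' c * w a' c d)"
    by (simp only: add_Suc pw.simps)
  have R0: "pw (Suc m) a b c d = (\<Sum>a'\<in>{0,1}. pw m a b a' c * w a' c d)" by (simp only: pw.simps)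
  have "pw (Suc m+4) a b c d + 8 * pw (Suc m+2) a b c d
      = (\<Sum>a'\<in>{0,1}. (pw (m+4) a b a' c + 8 * pw (m+2) a b a' c) * w a' c d)"
    by (simp only: R) (simp add: sum.distrib sum_distrib_left algebra_simps)
  also have "\<dots> = (\<Sum>a'\<in>{0,1}. (6 * pw (m+3) a b a' c + 2 * pw (m+1) a b a' c + pw m a b a' c) * w a' c d)"
    using IH by (intro sum.cong) auto
  also have "\<dots> = 6 * pw (Suc m+3) a b c d + 2 * pw (Suc m+1) a b c d + pw (Suc m) a b c d"
    by (simp only: R R0) (simp add: sum.distrib sum_distrib_left algebra_simps)
  finally show ?case .
qed

lemma tr_rec: "tr (m+4) + 8 * tr (m+2) = 6 * tr (m+3) + 2 * tr (m+1) + tr m"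
proof -
  have "tr (m+4) + 8 * tr (m+2) = (\<Sum>a\<in>{0,1}. \<Sum>b\<in>{0::nat,1}. pw (m+4) a b a b + 8 * pw (m+2) a b a b)"
    by (simp add: tr_def sum.distrib sum_distrib_left)
  also have "\<dots> = (\<Sum>a\<in>{0,1}. \<Sum>b\<in>{0::nat,1}. 6 * pw (m+3) a b a b + 2 * pw (m+1) a b a b + pw m a b a b)"
    by (intro sum.cong refl pw_rec) auto
  also have "\<dots> = 6 * tr (m+3) + 2 * tr (m+1) + tr m"
    by (simp add: tr_def sum.distrib sum_distrib_left)
  finally show ?thesis .
qed

lemma lucas6: "lucas (k+6) = 4 * lucas (k+3) + lucas k"
proof -
  have "lucas (Suc (Suc (Suc (Suc (Suc (Suc k)))))) = 4 * lucas (Suc (Suc (Suc k))) + lucas k" by simp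
  moreover have "k + 6 = Suc (Suc (Suc (Suc (Suc (Suc k)))))" "k+3 = Suc (Suc (Suc k))" by auto
  ultimately show ?thesis by metis
qed

lemma tr_lucas: "tr m = lucas (3*m) + 2"
proof (induction m rule: nat_less_induct)
  case (1 m)
  show ?case
  proof (cases "m < 4")
    case True
    then have "m = 0 \<or> m = 1 \<or> m = 2 \<or> m = 3" by auto
    then show ?thesis by (elim disjE) (simp_all add: tr_def numeral_eq_Suc w_def del: pw.simps(2) add: pw_Suc')
  next
    case False
    then obtain k where k: "m = k + 4" by (metis add.commute le_Suc_ex not_less)
    have "tr (k+4) + 8 * tr (k+2) = 6 * tr (k+3) + 2 * tr (k+1) + tr k" by (rule tr_rec)
    moreover have "tr (k+2) = lucas (3*k+6) + 2" "tr (k+3) = lucas (3*k+9) + 2"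
        "tr (k+1) = lucas (3*k+3) + 2" "tr k = lucas (3*k) + 2"
      using 1 k by (auto simp: algebra_simps)
    moreover have "lucas (3*k+12) = 4 * lucas (3*k+9) + lucas (3*k+6)"
      "lucas (3*k+9) = 4 * lucas (3*k+6) + lucas (3*k+3)"
      "lucas (3*k+6) = 4 * lucas (3*k+3) + lucas (3*k)"
      using lucas6[of "3*k+6"] lucas6[of "3*k+3"] lucas6[of "3*k"] by (simp_all add: algebra_simps)
    ultimately show ?thesis using k by (simp add: algebra_simps)
  qed
qed

lemma lucas_real: "real (lucas (3*n)) = (2 + sqrt 5) ^ n + (2 - sqrt 5) ^ n"
proof (induction n rule: nat_less_induct)
  case (1 n)
  show ?case
  proof (cases "n < 2")
    case True
    then have "n = 0 \<or> n = 1" by auto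
    then show ?thesis by (auto simp: numeral_eq_Suc)
  next
    case False
    then obtain k where k: "n = k + 2" by (metis add.commute le_Suc_ex not_less)
    have s5: "sqrt 5 ^ 2 = 5" by simp
    have e1: "(2 + sqrt 5) ^ (k+2) = 4 * (2 + sqrt 5) ^ (k+1) + (2 + sqrt 5) ^ k"
    proof -
      have "(2 + sqrt 5)^2 = 4 * (2 + sqrt 5) + 1" by (simp add: power2_eq_square algebra_simps)
      then show ?thesis by (simp add: power_add algebra_simps)
    qed
    have e2: "(2 - sqrt 5) ^ (k+2) = 4 * (2 - sqrt 5) ^ (k+1) + (2 - sqrt 5) ^ k"
    proof -
      have "(2 - sqrt 5)^2 = 4 * (2 - sqrt 5) + 1" by (simp add: power2_eq_square algebra_simps)
      then show ?thesis by (simp add: power_add algebra_simps)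
    qed
    have h1: "real (lucas (3*k+3)) = (2 + sqrt 5) ^ (k+1) + (2 - sqrt 5) ^ (k+1)"
      using 1[rule_format, of "k+1"] k by (simp add: add.commute)
    have h0: "real (lucas (3*k)) = (2 + sqrt 5) ^ k + (2 - sqrt 5) ^ k"
      using 1[rule_format, of "k"] k by simp
    have L: "real (lucas (3*(k+2))) = 4 * real (lucas (3*k+3)) + real (lucas (3*k))"
      using lucas6[of "3*k"] by (simp add: add.commute)
    show ?thesis unfolding k using L h1 h0 e1 e2 by linarith
  qed
qed



definition cs :: "nat \<Rightarrow> nat \<Rightarrow> nat" where "cs n v = (if Suc v = n then 0 else Suc v)"
definition cp :: "nat \<Rightarrow> nat \<Rightarrow> nat" where "cp n v = (if v = 0 then n - 1 else v - 1)"

lemma mod_cs: "u < n \<Longrightarrow> Suc u mod n = cs n u"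
  by (auto simp: cs_def)

lemma cs_lt: "v < n \<Longrightarrow> cs n v < n" and cp_lt: "v < n \<Longrightarrow> cp n v < n"
  by (auto simp: cs_def cp_def)

lemma nbhd: assumes "n \<ge> 3" "v < n"
  shows "{u \<in> {0..<n}. cycle_adj n v u} = {cs n v, cp n v}"
proof -
  have "cycle_adj n v u \<longleftrightarrow> u < n \<and> (u = cs n v \<or> v = cs n u)" for u
    using assms mod_cs[of v n] mod_cs[of u n] by (auto simp: cycle_adj_def)
  moreover have "u < n \<Longrightarrow> (v = cs n u) = (u = cp n v)" for u
    using assms by (auto simp: cs_def cp_def)
  ultimately show ?thesis using assms cs_lt cp_lt by auto
qed

lemma distinct3: assumes "n \<ge> 3" "v < n"
  shows "cs n v \<noteq> cp n v" "v \<noteq> cs n v" "v \<noteq> cp n v"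
  using assms by (auto simp: cs_def cp_def)

lemma degree2: "n \<ge> 3 \<Longrightarrow> v < n \<Longrightarrow> degree (cycle_adj n) {0..<n} v = 2"
  unfolding degree_def using nbhd distinct3 by simp

lemma cnbhd: assumes "n \<ge> 3" "v < n"
  shows "closed_nbhd (cycle_adj n) {0..<n} v = {v, cs n v, cp n v}"
proof -
  have "closed_nbhd (cycle_adj n) {0..<n} v = insert v {u \<in> {0..<n}. cycle_adj n v u}"
    using assms by (auto simp: closed_nbhd_def)
  then show ?thesis using nbhd[OF assms] by simp
qed

lemma card_filter3: assumes "a \<noteq> b" "a \<noteq> c" "b \<noteq> c"
  shows "card {u \<in> {a,b,c}. P u} = of_bool (P a) + of_bool (P b) + of_bool (P c)"
proof -
  have "(\<Sum>u\<in>{a,b,c}. if P u then (1::nat) else 0) = card {u \<in> {a,b,c}. P u}"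
    by (simp only: card_eq_sum[of "{u \<in> {a,b,c}. P u}"] sum.inter_filter[OF finite.insertI[OF finite.insertI[OF finite.insertI[OF finite.emptyI]]]])
  then have "card {u \<in> {a,b,c}. P u} = (\<Sum>u\<in>{a,b,c}. if P u then (1::nat) else 0)" ..
  then show ?thesis using assms by simp
qed

lemma sigma_eq:
  assumes "n \<ge> 3" "v < n" "\<forall>u<n. fst (s u) \<in> {0,1}"
  shows "sigma (cycle_adj n) {0..<n} s v = fst (s (cp n v)) + fst (s v) + fst (s (cs n v))"
proof -
  have "sigma (cycle_adj n) {0..<n} s v = card {u \<in> {v, cs n v, cp n v}. fst (s u) = 1}"
    unfolding sigma_def cnbhd[OF assms(1,2)] ..
  also have "\<dots> = of_bool (fst (s v) = 1) + of_bool (fst (s (cs n v)) = 1) + of_bool (fst (s (cp n v)) = 1)"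
    using distinct3[OF assms(1,2)] by (intro card_filter3) auto
  also have "\<dots> = fst (s (cp n v)) + fst (s v) + fst (s (cs n v))"
    using assms(3) cs_lt[OF assms(2)] cp_lt[OF assms(2)] assms(2) by auto
  finally show ?thesis .
qed



definition Kset :: "nat \<Rightarrow> (nat \<Rightarrow> nat) \<Rightarrow> nat \<Rightarrow> nat set" where
  "Kset n x v = {k \<in> {1..3}. (x v = 1) = (k \<le> x (cp n v) + x v + x (cs n v))}"

lemma incr_fix: "(x::nat) \<in> {0,1} \<Longrightarrow>
  ((if \<sigma> \<ge> k then 1 else 0, if x = 0 \<and> \<sigma> \<ge> k then k + 1 else (k::nat)) = (x, k)) \<longleftrightarrow> ((x = 1) = (k \<le> \<sigma>))"
  by (cases "k \<le> \<sigma>") auto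

lemma Fix_char:
  assumes n: "n \<ge> 3"
  shows "Fix_F_up (cycle_adj n) {0..<n} =
    {s \<in> (\<Pi>\<^sub>E v\<in>{0..<n}. {0,1} \<times> {1..3}). \<forall>v\<in>{0..<n}.
       (fst (s v) = 1) = (snd (s v) \<le> fst (s (cp n v)) + fst (s v) + fst (s (cs n v)))}"
    (is "?L = ?R")
proof -
  have ES: "ext_states (cycle_adj n) {0..<n} = (\<Pi>\<^sub>E v\<in>{0..<n}. {0,1} \<times> {1..3})"
    unfolding ext_states_def using degree2[OF n] by (intro PiE_cong) simp
  have key: "F_up (cycle_adj n) {0..<n} s = s \<longleftrightarrow>
      (\<forall>v\<in>{0..<n}. (fst (s v) = 1) = (snd (s v) \<le> fst (s (cp n v)) + fst (s v) + fst (s (cs n v))))"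
    if s: "s \<in> (\<Pi>\<^sub>E v\<in>{0..<n}. {0,1} \<times> {1..3})" for s
  proof -
    have fs: "\<forall>u<n. fst (s u) \<in> {0,1}" using s by (auto simp: PiE_iff mem_Times_iff)
    have "F_up (cycle_adj n) {0..<n} s = s \<longleftrightarrow> (\<forall>v\<in>{0..<n}. incr_vertex_fun (cycle_adj n) {0..<n} s v = s v)"
      using s unfolding F_up_def by (auto simp: fun_eq_iff PiE_iff restrict_def extensional_def)
    also have "\<dots> \<longleftrightarrow> (\<forall>v\<in>{0..<n}. (fst (s v) = 1) = (snd (s v) \<le> fst (s (cp n v)) + fst (s v) + fst (s (cs n v))))"
    proof (intro ball_cong refl)
      fix v assume v: "v \<in> {0..<n}"
      have "incr_vertex_fun (cycle_adj n) {0..<n} s v = s v \<longleftrightarrow>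
        ((if sigma (cycle_adj n) {0..<n} s v \<ge> snd (s v) then 1 else 0,
          if fst (s v) = 0 \<and> sigma (cycle_adj n) {0..<n} s v \<ge> snd (s v) then snd (s v) + 1 else snd (s v))
         = (fst (s v), snd (s v)))"
        unfolding incr_vertex_fun_def Let_def by simp
      also have "\<dots> \<longleftrightarrow> (fst (s v) = 1) = (snd (s v) \<le> sigma (cycle_adj n) {0..<n} s v)"
        using fs v by (intro incr_fix) auto
      also have "\<dots> \<longleftrightarrow> (fst (s v) = 1) = (snd (s v) \<le> fst (s (cp n v)) + fst (s v) + fst (s (cs n v)))"
        using sigma_eq[OF n _ fs] v by simp
      finally show "incr_vertex_fun (cycle_adj n) {0..<n} s v = s v \<longleftrightarrow>
        (fst (s v) = 1) = (snd (s v) \<le> fst (s (cp n v)) + fst (s v) + fst (s (cs n v)))" .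
    qed
    finally show ?thesis .
  qed
  show ?thesis unfolding Fix_F_up_def ES using key by blast
qed

lemma card_Kset:
  assumes "a \<in> {0,1}" "b \<in> {0,1}" "c \<in> {0,1}"
  shows "card {k \<in> {1..3::nat}. (b = 1) = (k \<le> a + b + c)} = w a b c"
proof -
  have "{1..3::nat} = {1,2,3}" by auto
  then have "card {k \<in> {1..3::nat}. (b = 1) = (k \<le> a + b + c)}
     = of_bool ((b = 1) = (1 \<le> a + b + c)) + of_bool ((b = 1) = (2 \<le> a + b + c)) + of_bool ((b = 1) = (3 \<le> a + b + c))"
    by (simp only:) (rule card_filter3; simp)
  moreover have "a = 0 \<or> a = 1" "b = 0 \<or> b = 1" "c = 0 \<or> c = 1" using assms by auto
  ultimately show ?thesis by (elim disjE) (simp_all add: w_def)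
qed

lemma card_Fix_sum:
  assumes n: "n \<ge> 3"
  shows "card (Fix_F_up (cycle_adj n) {0..<n}) =
    (\<Sum>x\<in>(\<Pi>\<^sub>E v\<in>{0..<n}. {0::nat,1}). \<Prod>v\<in>{0..<n}. w (x (cp n v)) (x v) (x (cs n v)))"
proof -
  let ?V = "{0..<n}"
  let ?X = "\<Pi>\<^sub>E v\<in>?V. {0::nat,1}"
  let ?S = "SIGMA x:?X. (\<Pi>\<^sub>E v\<in>?V. Kset n x v)"
  let ?f = "\<lambda>s. (restrict (\<lambda>v. fst (s v)) ?V, restrict (\<lambda>v. snd (s v)) ?V)"
  let ?g = "\<lambda>p. restrict (\<lambda>v. (fst p v, snd p v)) ?V"
  have cpl: "\<And>v. v \<in> ?V \<Longrightarrow> cp n v \<in> ?V" and csl: "\<And>v. v \<in> ?V \<Longrightarrow> cs n v \<in> ?V"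
    using cp_lt cs_lt by auto
  have "bij_betw ?f (Fix_F_up (cycle_adj n) ?V) ?S"
  proof (rule bij_betw_byWitness[where f' = ?g])
    show "\<forall>s\<in>Fix_F_up (cycle_adj n) ?V. ?g (?f s) = s"
    proof
      fix s assume h: "s \<in> Fix_F_up (cycle_adj n) ?V"
      have "s \<in> (\<Pi>\<^sub>E v\<in>?V. {0,1} \<times> {1..3}) \<and> (\<forall>v\<in>?V.
       (fst (s v) = 1) = (snd (s v) \<le> fst (s (cp n v)) + fst (s v) + fst (s (cs n v))))"
        using h unfolding Fix_char[OF n] mem_Collect_eq .
      then have s: "s \<in> (\<Pi>\<^sub>E v\<in>?V. {0,1} \<times> {1..3})" by (rule conjunct1)
      show "?g (?f s) = s"
      proof
        fix v show "?g (?f s) v = s v"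
        proof (cases "v \<in> ?V")
          case False then show ?thesis using PiE_arb[OF s False] by simp
        qed simp
      qed
    qed
    show "\<forall>p\<in>?S. ?f (?g p) = p"
    proof
      fix p assume hp: "p \<in> ?S"
      obtain x k where p1: "p = (x,k)" by (cases p)
      have p2: "x \<in> ?X" "k \<in> (\<Pi>\<^sub>E v\<in>?V. Kset n x v)" using hp unfolding p1 mem_Sigma_iff by simp_all
      note p = p1 p2
      have "restrict (\<lambda>v. fst (?g p v)) ?V = x"
      proof
        fix v show "restrict (\<lambda>v. fst (?g p v)) ?V v = x v"
        proof (cases "v \<in> ?V")
          case False then show ?thesis using PiE_arb[OF p(2) False] by simp
        qed (simp add: p)
      qed
      moreover have "restrict (\<lambda>v. snd (?g p v)) ?V = k"
      proof
        fix v show "restrict (\<lambda>v. snd (?g p v)) ?V v = k v"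
        proof (cases "v \<in> ?V")
          case False then show ?thesis using PiE_arb[OF p(3) False] by simp
        qed (simp add: p)
      qed
      ultimately show "?f (?g p) = p" using p by simp
    qed
    show "?f ` Fix_F_up (cycle_adj n) ?V \<subseteq> ?S"
    proof
      fix q assume "q \<in> ?f ` Fix_F_up (cycle_adj n) ?V"
      then obtain s where q: "q = ?f s" and h: "s \<in> Fix_F_up (cycle_adj n) ?V" by (rule imageE)
      have sc: "s \<in> (\<Pi>\<^sub>E v\<in>?V. {0,1} \<times> {1..3}) \<and> (\<forall>v\<in>?V.
       (fst (s v) = 1) = (snd (s v) \<le> fst (s (cp n v)) + fst (s v) + fst (s (cs n v))))"
        using h unfolding Fix_char[OF n] mem_Collect_eq .
      note s = sc[THEN conjunct1] and c = sc[THEN conjunct2]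
      have "restrict (\<lambda>v. fst (s v)) ?V \<in> ?X" using s by (auto simp: PiE_iff)
      moreover have "restrict (\<lambda>v. snd (s v)) ?V \<in> (\<Pi>\<^sub>E v\<in>?V. Kset n (restrict (\<lambda>v. fst (s v)) ?V) v)"
      proof (rule PiE_I)
        fix v assume v: "v \<in> ?V"
        have "snd (s v) \<in> {1..3}" using PiE_mem[OF s v] by (simp add: mem_Times_iff)
        then show "restrict (\<lambda>v. snd (s v)) ?V v \<in> Kset n (restrict (\<lambda>v. fst (s v)) ?V) v"
          using c v cpl[OF v] csl[OF v] by (simp add: Kset_def)
      qed simp
      ultimately show "q \<in> ?S" unfolding q by (rule SigmaI[where B = "\<lambda>x. \<Pi>\<^sub>E v\<in>?V. Kset n x v"])
    qed
    show "?g ` ?S \<subseteq> Fix_F_up (cycle_adj n) ?V"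
    proof
      fix t assume "t \<in> ?g ` ?S"
      then obtain p where t0: "t = ?g p" and hp: "p \<in> ?S" by (rule imageE)
      obtain x k where p1: "p = (x,k)" by (cases p)
      have x: "x \<in> ?X" and k: "k \<in> (\<Pi>\<^sub>E v\<in>?V. Kset n x v)" using hp unfolding p1 mem_Sigma_iff by simp_all
      have t: "t = ?g (x,k)" using t0 p1 by simp
      have "t \<in> (\<Pi>\<^sub>E v\<in>?V. {0,1} \<times> {1..3})"
      proof (unfold t, rule PiE_I)
        fix v assume v: "v \<in> ?V"
        have "x v \<in> {0,1}" "k v \<in> Kset n x v" using x k v by (auto simp: PiE_iff)
        then show "?g (x,k) v \<in> {0,1} \<times> {1..3}" using v by (auto simp: Kset_def)
      qed simp
      moreover have "\<forall>v\<in>?V. (fst (t v) = 1) = (snd (t v) \<le> fst (t (cp n v)) + fst (t v) + fst (t (cs n v)))"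
      proof
        fix v assume v: "v \<in> ?V"
        have "k v \<in> Kset n x v" using k v by (auto simp: PiE_iff)
        then show "(fst (t v) = 1) = (snd (t v) \<le> fst (t (cp n v)) + fst (t v) + fst (t (cs n v)))"
          using v cpl[OF v] csl[OF v] t by (simp add: Kset_def)
      qed
      ultimately show "t \<in> Fix_F_up (cycle_adj n) ?V" unfolding Fix_char[OF n] mem_Collect_eq by (rule conjI)
    qed
  qed
  then have "card (Fix_F_up (cycle_adj n) ?V) = card ?S" by (rule bij_betw_same_card)
  also have "\<dots> = (\<Sum>x\<in>?X. card (\<Pi>\<^sub>E v\<in>?V. Kset n x v))"
    by (rule card_SigmaI) (auto simp: Kset_def intro!: finite_PiE)
  also have "\<dots> = (\<Sum>x\<in>?X. \<Prod>v\<in>?V. card (Kset n x v))"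
    by (simp add: card_PiE)
  also have "\<dots> = (\<Sum>x\<in>?X. \<Prod>v\<in>?V. w (x (cp n v)) (x v) (x (cs n v)))"
  proof (intro sum.cong prod.cong refl)
    fix x v assume x: "x \<in> ?X" and v: "v \<in> ?V"
    then show "card (Kset n x v) = w (x (cp n v)) (x v) (x (cs n v))"
      unfolding Kset_def using cpl[OF v] csl[OF v]
      by (intro card_Kset) (auto simp: PiE_iff)
  qed
  finally show ?thesis .
qed



definition PW :: "nat \<Rightarrow> (nat \<Rightarrow> nat) \<Rightarrow> nat" where
  "PW m y = (\<Prod>i<m. w (y i) (y (Suc i)) (y (Suc (Suc i))))"

definition PP :: "nat \<Rightarrow> (nat \<Rightarrow> nat) set" where
  "PP m = (\<Pi>\<^sub>E i\<in>{0..<Suc (Suc m)}. {0::nat,1})"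

definition Aset :: "nat \<Rightarrow> nat \<Rightarrow> nat \<Rightarrow> nat \<Rightarrow> nat \<Rightarrow> (nat \<Rightarrow> nat) set" where
  "Aset m a b c d = {y \<in> PP m. y 0 = a \<and> y 1 = b \<and> y m = c \<and> y (Suc m) = d}"

lemma finite_PP: "finite (PP m)"
  unfolding PP_def by (rule finite_PiE) auto

lemma finite_Aset: "finite (Aset m a b c d)"
  unfolding Aset_def using finite_PP by simp

lemma PW_cong: "(\<And>i. i < Suc (Suc m) \<Longrightarrow> y i = z i) \<Longrightarrow> PW m y = PW m z"
  unfolding PW_def by (intro prod.cong refl) auto

lemma path:
  assumes "c \<in> {0,1}" "d \<in> {0,1}"
  shows "(\<Sum>y\<in>Aset m a b c d. PW m y) = pw m a b c d"
  using assms
proof (induction m arbitrary: c d)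
  case 0
  show ?case
  proof (cases "a = c \<and> b = d")
    case False
    then have "Aset 0 a b c d = {}" by (auto simp: Aset_def)
    then show ?thesis using False by simp
  next
    case True
    let ?y0 = "restrict (\<lambda>i. if i = 0 then a else b) {0..<Suc (Suc 0)}"
    have "Aset 0 a b c d = {?y0}"
    proof (intro equalityI subsetI)
      fix y assume y: "y \<in> Aset 0 a b c d"
      have "y = ?y0"
      proof
        fix i
        have yP: "y \<in> (\<Pi>\<^sub>E i\<in>{0..<Suc (Suc 0)}. {0::nat,1})" and y0: "y 0 = a" and y1: "y 1 = b"
          using y by (simp_all add: Aset_def PP_def)
        show "y i = ?y0 i"
        proof (cases "i < 2")
          case True then have "i = 0 \<or> i = 1" by auto
          then show ?thesis using y0 y1 by auto
        next
          case False then show ?thesis using PiE_arb[OF yP, of i] by simp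
        qed
      qed
      then show "y \<in> {?y0}" by simp
    next
      fix y assume "y \<in> {?y0}"
      then show "y \<in> Aset 0 a b c d" using True 0 by (auto simp: Aset_def PP_def)
    qed
    then show ?thesis using True by (simp add: PW_def)
  qed
next
  case (Suc m)
  let ?A = "Aset (Suc m) a b c d"
  have "(\<Sum>y\<in>?A. PW (Suc m) y) = (\<Sum>a'\<in>{0,1}. \<Sum>y\<in>{y. y \<in> ?A \<and> y m = a'}. PW (Suc m) y)"
  proof (rule sum.group[symmetric])
    show "finite ?A" by (rule finite_Aset)
    show "(\<lambda>y. y m) ` ?A \<subseteq> {0,1}"
    proof
      fix q assume "q \<in> (\<lambda>y. y m) ` ?A"
      then obtain y where q: "q = y m" and y: "y \<in> PP (Suc m)" by (auto simp: Aset_def)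
      show "q \<in> {0,1}" using PiE_mem[OF y[unfolded PP_def], of m] q by simp
    qed
  qed simp
  also have "\<dots> = (\<Sum>a'\<in>{0,1}. \<Sum>z\<in>Aset m a b a' c. PW m z * w a' c d)"
  proof (rule sum.cong[OF refl])
    fix a' assume a': "a' \<in> {0::nat,1}"
    show "(\<Sum>y\<in>{y. y \<in> ?A \<and> y m = a'}. PW (Suc m) y) = (\<Sum>z\<in>Aset m a b a' c. PW m z * w a' c d)"
    proof (rule sum.reindex_bij_witness[where i = "\<lambda>z. z(Suc (Suc m) := d)" and j = "\<lambda>y. restrict y {0..<Suc (Suc m)}"])
      fix y assume y: "y \<in> {y. y \<in> ?A \<and> y m = a'}"
      show "(restrict y {0..<Suc (Suc m)})(Suc (Suc m) := d) = y"
      proof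
        fix i
        have yP: "y \<in> (\<Pi>\<^sub>E i\<in>{0..<Suc (Suc (Suc m))}. {0::nat,1})" and yd: "y (Suc (Suc m)) = d"
          using y by (simp_all add: Aset_def PP_def)
        show "((restrict y {0..<Suc (Suc m)})(Suc (Suc m) := d)) i = y i"
        proof (cases "i < Suc (Suc m)")
          case True then show ?thesis by simp
        next
          case False
          show ?thesis
          proof (cases "i = Suc (Suc m)")
            case True then show ?thesis using yd by simp
          next
            case F2: False
            then have "i \<notin> {0..<Suc (Suc (Suc m))}" using False by simp
            then show ?thesis using PiE_arb[OF yP] False F2 by simp
          qed
        qed
      qed
      show "restrict y {0..<Suc (Suc m)} \<in> Aset m a b a' c"
        using y by (auto simp: Aset_def PP_def PiE_iff)
      show "PW m (restrict y {0..<Suc (Suc m)}) * w a' c d = PW (Suc m) y"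
      proof -
        have "PW m (restrict y {0..<Suc (Suc m)}) = PW m y" by (rule PW_cong) simp
        moreover have "PW (Suc m) y = PW m y * w (y m) (y (Suc m)) (y (Suc (Suc m)))"
          by (simp add: PW_def)
        ultimately show ?thesis using y by (simp add: Aset_def)
      qed
    next
      fix z assume z: "z \<in> Aset m a b a' c"
      show "restrict (z(Suc (Suc m) := d)) {0..<Suc (Suc m)} = z"
      proof
        fix i
        have zP: "z \<in> (\<Pi>\<^sub>E i\<in>{0..<Suc (Suc m)}. {0::nat,1})"
          using z by (simp add: Aset_def PP_def)
        show "restrict (z(Suc (Suc m) := d)) {0..<Suc (Suc m)} i = z i"
        proof (cases "i < Suc (Suc m)")
          case False then show ?thesis using PiE_arb[OF zP, of i] by simp
        qed simp
      qed
      show "z(Suc (Suc m) := d) \<in> {y. y \<in> ?A \<and> y m = a'}"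
        using z Suc.prems by (auto simp: Aset_def PP_def PiE_iff extensional_def)
    qed
  qed
  also have "\<dots> = (\<Sum>a'\<in>{0,1}. pw m a b a' c * w a' c d)"
  proof (rule sum.cong[OF refl])
    fix a' assume a': "a' \<in> {0::nat,1}"
    have "(\<Sum>z\<in>Aset m a b a' c. PW m z * w a' c d) = (\<Sum>z\<in>Aset m a b a' c. PW m z) * w a' c d"
      by (simp add: sum_distrib_right)
    also have "\<dots> = pw m a b a' c * w a' c d" using Suc.IH[of a' c] a' Suc.prems by simp
    finally show "(\<Sum>z\<in>Aset m a b a' c. PW m z * w a' c d) = pw m a b a' c * w a' c d" .
  qed
  also have "\<dots> = pw (Suc m) a b c d" by simp
  finally show ?case .
qed



definition toP :: "nat \<Rightarrow> (nat \<Rightarrow> nat) \<Rightarrow> (nat \<Rightarrow> nat)" where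
  "toP n x = restrict (\<lambda>i. if i = 0 then x (n - 1) else if i = Suc n then x 0 else x (i - 1)) {0..<Suc (Suc n)}"

definition toC :: "nat \<Rightarrow> (nat \<Rightarrow> nat) \<Rightarrow> (nat \<Rightarrow> nat)" where
  "toC n y = restrict (\<lambda>v. y (Suc v)) {0..<n}"

lemma cycle_path:
  assumes n: "n \<ge> 3"
  shows "(\<Sum>x\<in>(\<Pi>\<^sub>E v\<in>{0..<n}. {0::nat,1}). \<Prod>v\<in>{0..<n}. w (x (cp n v)) (x v) (x (cs n v)))
       = (\<Sum>y\<in>{y \<in> PP n. y 0 = y n \<and> y 1 = y (Suc n)}. PW n y)"
proof (rule sum.reindex_bij_witness[where i = "toC n" and j = "toP n"])
  fix x assume x: "x \<in> (\<Pi>\<^sub>E v\<in>{0..<n}. {0::nat,1})"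
  show "toC n (toP n x) = x"
  proof
    fix v show "toC n (toP n x) v = x v"
    proof (cases "v < n")
      case False then show ?thesis using PiE_arb[OF x] by (simp add: toC_def)
    qed (simp add: toC_def toP_def)
  qed
  show "toP n x \<in> {y \<in> PP n. y 0 = y n \<and> y 1 = y (Suc n)}"
  proof -
    have "toP n x \<in> PP n" unfolding PP_def toP_def
    proof (rule PiE_I)
      fix i assume "i \<in> {0..<Suc (Suc n)}"
      then show "restrict (\<lambda>i. if i = 0 then x (n - 1) else if i = Suc n then x 0 else x (i - 1)) {0..<Suc (Suc n)} i \<in> {0,1}"
        using x n by (auto simp: PiE_iff)
    qed (simp add: toP_def)
    moreover have "toP n x 0 = toP n x n" "toP n x 1 = toP n x (Suc n)"
      using n by (auto simp: toP_def)
    ultimately show ?thesis by simp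
  qed
  show "PW n (toP n x) = (\<Prod>v\<in>{0..<n}. w (x (cp n v)) (x v) (x (cs n v)))"
    unfolding PW_def atLeast0LessThan
  proof (rule prod.cong[OF refl])
    fix v assume v: "v \<in> {..<n}"
    show "w (toP n x v) (toP n x (Suc v)) (toP n x (Suc (Suc v))) = w (x (cp n v)) (x v) (x (cs n v))"
      using v n by (auto simp: cp_def cs_def toP_def)
  qed
next
  fix y assume y: "y \<in> {y \<in> PP n. y 0 = y n \<and> y 1 = y (Suc n)}"
  then have yP: "y \<in> PP n" and y0: "y 0 = y n" and y1: "y 1 = y (Suc n)" by auto
  show "toP n (toC n y) = y"
  proof
    fix i
    show "toP n (toC n y) i = y i"
    proof (cases "i < Suc (Suc n)")
      case False then show ?thesis using PiE_arb[OF yP[unfolded PP_def]] by (simp add: toP_def)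
    next
      case True
      then show ?thesis using n y0 y1 by (cases "i = 0"; cases "i = Suc n") (auto simp: toP_def toC_def)
    qed
  qed
  show "toC n y \<in> (\<Pi>\<^sub>E v\<in>{0..<n}. {0::nat,1})"
  proof (unfold toC_def, rule PiE_I)
    fix v assume "v \<in> {0..<n}"
    then show "restrict (\<lambda>v. y (Suc v)) {0..<n} v \<in> {0,1}"
      using PiE_mem[OF yP[unfolded PP_def], of "Suc v"] by simp
  qed simp
qed

lemma Q_tr:
  "(\<Sum>y\<in>{y \<in> PP n. y 0 = y n \<and> y 1 = y (Suc n)}. PW n y) = tr n"
proof -
  let ?Q = "{y \<in> PP n. y 0 = y n \<and> y 1 = y (Suc n)}"
  have "(\<Sum>y\<in>?Q. PW n y) = (\<Sum>p\<in>{0::nat,1} \<times> {0::nat,1}. \<Sum>y\<in>{y. y \<in> ?Q \<and> (y 0, y 1) = p}. PW n y)"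
  proof (rule sum.group[symmetric])
    show "finite ?Q" using finite_PP by simp
    show "(\<lambda>y. (y 0, y 1)) ` ?Q \<subseteq> {0,1} \<times> {0,1}"
    proof
      fix q assume "q \<in> (\<lambda>y. (y 0, y 1)) ` ?Q"
      then obtain y where q: "q = (y 0, y 1)" and y: "y \<in> PP n" by blast
      have "y 0 \<in> {0,1}" "y 1 \<in> {0,1}" using PiE_mem[OF y[unfolded PP_def], of 0] PiE_mem[OF y[unfolded PP_def], of 1] by simp_all
      then show "q \<in> {0,1} \<times> {0,1}" using q by auto
    qed
  qed simp
  also have "\<dots> = (\<Sum>p\<in>{0::nat,1} \<times> {0::nat,1}. pw n (fst p) (snd p) (fst p) (snd p))"
  proof (rule sum.cong[OF refl])
    fix p :: "nat \<times> nat" assume p: "p \<in> {0,1} \<times> {0,1}"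
    have "{y. y \<in> ?Q \<and> (y 0, y 1) = p} = Aset n (fst p) (snd p) (fst p) (snd p)"
      by (cases p) (auto simp: Aset_def)
    then show "(\<Sum>y\<in>{y. y \<in> ?Q \<and> (y 0, y 1) = p}. PW n y) = pw n (fst p) (snd p) (fst p) (snd p)"
      using path p by auto
  qed
  also have "\<dots> = tr n"
    unfolding tr_def by (simp add: sum.cartesian_product)
  finally show ?thesis .
qed


theorem proposition4p4:
  fixes n :: nat
  assumes "n \<ge> 3"
  shows "card (Fix_F_up (cycle_adj n) {0..<n}) = 2 + lucas (3 * n)
       \<and> real (card (Fix_F_up (cycle_adj n) {0..<n})) = 2 + (2 + sqrt 5) ^ n + (2 - sqrt 5) ^ n"
proof -
  have c: "card (Fix_F_up (cycle_adj n) {0..<n}) = 2 + lucas (3 * n)"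
    using card_Fix_sum[OF assms] cycle_path[OF assms] Q_tr[of n] tr_lucas[of n] by simp
  then have "real (card (Fix_F_up (cycle_adj n) {0..<n})) = 2 + real (lucas (3 * n))" by simp
  then have "real (card (Fix_F_up (cycle_adj n) {0..<n})) = 2 + (2 + sqrt 5) ^ n + (2 - sqrt 5) ^ n"
    using lucas_real[of n] by simp
  with c show ?thesis by blast
qed

end
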